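(* Let $G$ be a finite induced regular group with $[G:Z(G)]=p^q$, where $p$ and $q$ are primes. Then $G/Z(G)$ is an elementary $p$-group. Moreover, for each $x\in G\setminus Z(G)$, $|\beta_G(x)|=(p-1)|Z(G)|$.
   Context: For a finite group $G$, $C_G(x)$ denotes the centralizer of $x\in G$ and $Z(G)$ the center; $\beta_G(x)=\{y\in G\mid C_G(y)=C_G(x)\}$. The non-centralizer graph $\Upsilon_G$ is the simple graph with vertex set $G$ in which two distinct vertices $x,y$ are adjacent iff $C_G(x)\neq C_G(y)$; the induced non-centralizer graph $\Upsilon_{G\setminus Z(G)}$ is its induced subgraph on $G\setminus Z(G)$. $G$ is called induced regular if $\Upsilon_{G\setminus Z(G)}$ is a regular graph. A group is called an elementary $p$-group if every non-identity element has order exactly $p$ (it need not be abelian). *)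

theory Defs
  imports "HOL-Algebra.Algebra"
begin

definition centralizer :: "('a, 'b) monoid_scheme \<Rightarrow> 'a \<Rightarrow> 'a set" where
  "centralizer G x = {y \<in> carrier G. x \<otimes>\<^bsub>G\<^esub> y = y \<otimes>\<^bsub>G\<^esub> x}"

definition center :: "('a, 'b) monoid_scheme \<Rightarrow> 'a set" where
  "center G = {z \<in> carrier G. \<forall>y \<in> carrier G. z \<otimes>\<^bsub>G\<^esub> y = y \<otimes>\<^bsub>G\<^esub> z}"

definition beta :: "('a, 'b) monoid_scheme \<Rightarrow> 'a \<Rightarrow> 'a set" where
  "beta G x = {y \<in> carrier G. centralizer G y = centralizer G x}"

definition nc_adj :: "('a, 'b) monoid_scheme \<Rightarrow> 'a \<Rightarrow> 'a \<Rightarrow> bool" where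
  "nc_adj G x y \<longleftrightarrow> x \<noteq> y \<and> centralizer G x \<noteq> centralizer G y"

definition induced_nc_degree :: "('a, 'b) monoid_scheme \<Rightarrow> 'a \<Rightarrow> nat" where
  "induced_nc_degree G x = card {y \<in> carrier G - center G. nc_adj G x y}"

definition induced_regular :: "('a, 'b) monoid_scheme \<Rightarrow> bool" where
  "induced_regular G \<longleftrightarrow>
     (\<forall>x \<in> carrier G - center G. \<forall>y \<in> carrier G - center G.
        induced_nc_degree G x = induced_nc_degree G y)"

definition elementary_p_group :: "('a, 'b) monoid_scheme \<Rightarrow> nat \<Rightarrow> bool" where
  "elementary_p_group H p \<longleftrightarrow>
     (\<forall>x \<in> carrier H. x \<noteq> \<one>\<^bsub>H\<^esub> \<longrightarrow> group.ord H x = p)"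

end

theory Submission imports Defs "HOL-Computational_Algebra.Primes"
begin

context group begin

lemma inv_commute:
  assumes "a \<in> carrier G" "y \<in> carrier G" "a \<otimes> y = y \<otimes> a"
  shows "inv a \<otimes> y = y \<otimes> inv a"
proof -
  have "inv a \<otimes> y = inv a \<otimes> y \<otimes> (a \<otimes> inv a)" using assms by simp
  also have "\<dots> = inv a \<otimes> (y \<otimes> a) \<otimes> inv a" using assms by (simp only: m_assoc inv_closed m_closed)
  also have "\<dots> = inv a \<otimes> (a \<otimes> y) \<otimes> inv a" using assms by simp
  also have "\<dots> = y \<otimes> inv a" using assms(1,2) by (simp add: m_assoc[symmetric])
  finally show ?thesis .
qed

lemma comm_set_subgroup:
  assumes "S \<subseteq> carrier G"
  shows "subgroup {y \<in> carrier G. \<forall>s\<in>S. y \<otimes> s = s \<otimes> y} G"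
proof (rule subgroupI)
  show "{y \<in> carrier G. \<forall>s\<in>S. y \<otimes> s = s \<otimes> y} \<noteq> {}"
  proof -
    have "\<one> \<in> {y \<in> carrier G. \<forall>s\<in>S. y \<otimes> s = s \<otimes> y}" using assms by auto
    thus ?thesis by blast
  qed
  fix a b assume a: "a \<in> {y \<in> carrier G. \<forall>s\<in>S. y \<otimes> s = s \<otimes> y}"
    and b: "b \<in> {y \<in> carrier G. \<forall>s\<in>S. y \<otimes> s = s \<otimes> y}"
  show "inv a \<in> {y \<in> carrier G. \<forall>s\<in>S. y \<otimes> s = s \<otimes> y}"
    using a assms inv_commute by auto
  show "a \<otimes> b \<in> {y \<in> carrier G. \<forall>s\<in>S. y \<otimes> s = s \<otimes> y}"
  proof -
    have "\<forall>s\<in>S. a \<otimes> b \<otimes> s = s \<otimes> (a \<otimes> b)"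
    proof
      fix s assume s: "s \<in> S"
      hence sc: "s \<in> carrier G" using assms by auto
      have "a \<otimes> b \<otimes> s = a \<otimes> (s \<otimes> b)" using a b s sc by (simp add: m_assoc)
      also have "\<dots> = s \<otimes> (a \<otimes> b)" using a b s sc by (simp add: m_assoc[symmetric])
      finally show "a \<otimes> b \<otimes> s = s \<otimes> (a \<otimes> b)" .
    qed
    thus ?thesis using a b by auto
  qed
qed auto

lemma center_eq: "center G = {y \<in> carrier G. \<forall>s\<in>carrier G. y \<otimes> s = s \<otimes> y}"
  by (simp add: center_def)

lemma center_subgroup: "subgroup (center G) G"
  unfolding center_eq by (rule comm_set_subgroup) simp

lemma center_normal: "center G \<lhd> G"
proof (rule normalI[OF center_subgroup])
  show "\<forall>x\<in>carrier G. center G #> x = x <# center G"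
    by (auto simp: r_coset_def l_coset_def center_def)
qed

lemma center_iff:
  "x \<in> carrier G \<Longrightarrow> x \<in> center G \<longleftrightarrow> centralizer G x = carrier G"
  by (auto simp: center_def centralizer_def)

lemma centralizer_sub: "centralizer G x \<subseteq> carrier G"
  by (auto simp: centralizer_def)

lemma centralizer_center_mult:
  assumes x: "x \<in> carrier G" and z: "z \<in> center G"
  shows "centralizer G (z \<otimes> x) = centralizer G x"
proof -
  have zc: "z \<in> carrier G" and zz: "\<And>y. y \<in> carrier G \<Longrightarrow> z \<otimes> y = y \<otimes> z"
    using z by (auto simp: center_def)
  have "z \<otimes> x \<otimes> y = y \<otimes> (z \<otimes> x) \<longleftrightarrow> x \<otimes> y = y \<otimes> x" if y: "y \<in> carrier G" for y
  proof -
    have "z \<otimes> x \<otimes> y = z \<otimes> (x \<otimes> y)" using x y zc by (simp add: m_assoc)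
    moreover have "y \<otimes> (z \<otimes> x) = z \<otimes> (y \<otimes> x)"
      using x y zc zz[OF y] by (metis m_assoc)
    ultimately show ?thesis using x y zc by simp
  qed
  thus ?thesis by (auto simp: centralizer_def)
qed

lemma commute_pow:
  assumes "y \<in> carrier G" "g \<in> carrier G" "y \<otimes> g = g \<otimes> y"
  shows "y \<otimes> g [^] (n::nat) = g [^] n \<otimes> y"
proof (induction n)
  case (Suc n)
  have "y \<otimes> g [^] Suc n = y \<otimes> g [^] n \<otimes> g" using assms by (simp add: m_assoc)
  also have "\<dots> = g [^] n \<otimes> (y \<otimes> g)" using Suc assms by (simp add: m_assoc)
  also have "\<dots> = g [^] Suc n \<otimes> y" using assms by (simp add: m_assoc)
  finally show ?case .
qed (use assms in simp)

lemma centralizer_pow: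
  assumes "x \<in> carrier G"
  shows "centralizer G x \<subseteq> centralizer G (x [^] (n::nat))"
  using assms commute_pow by (auto simp: centralizer_def)

lemma beta_sub:
  assumes "x \<in> carrier G - center G"
  shows "beta G x \<subseteq> carrier G - center G"
  using assms center_iff by (auto simp: beta_def)

lemma rcos_center_sub_beta:
  assumes "y \<in> beta G x"
  shows "center G #> y \<subseteq> beta G x"
  using assms centralizer_center_mult
  by (auto simp: beta_def r_coset_def center_def)

lemma card_beta:
  assumes fin: "finite (carrier G)"
  shows "card (beta G x) = card (center G) * card ((\<lambda>y. center G #> y) ` beta G x)"
proof -
  let ?C = "(\<lambda>y. center G #> y) ` beta G x"
  have bc: "beta G x \<subseteq> carrier G" by (auto simp: beta_def)
  have U: "\<Union>?C = beta G x"
    using rcos_center_sub_beta rcos_self[OF _ center_subgroup] bc by blast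
  have fC: "finite ?C" using fin bc finite_subset by blast
  have rc: "c \<in> rcosets (center G)" if "c \<in> ?C" for c
    using that bc by (auto simp: RCOSETS_def)
  have "card (center G) * card ?C = card (\<Union>?C)"
  proof (rule card_partition)
    show "finite ?C" by fact
    show "finite (\<Union>?C)" using U fin bc finite_subset by metis
    show "card c = card (center G)" if "c \<in> ?C" for c
    proof -
      show "card c = card (center G)"
        using card_rcosets_equal[OF rc[OF that] subgroup.subset[OF center_subgroup]] by simp
    qed
    show "c1 \<inter> c2 = {}" if "c1 \<in> ?C" "c2 \<in> ?C" "c1 \<noteq> c2" for c1 c2
      using rc[OF that(1)] rc[OF that(2)] that(3) rcos_disjoint[OF center_subgroup]
      unfolding pairwise_def disjnt_def by blast
  qed
  thus ?thesis using U by simp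
qed

end

lemma pow_sub1_dvd:
  fixes p b :: nat
  assumes p: "p \<ge> 2" and b: "b \<ge> 1"
  shows "(p ^ b - 1) dvd (p ^ n - 1) \<Longrightarrow> b dvd n"
proof (induction n rule: less_induct)
  case (less n)
  show ?case
  proof (cases "n < b")
    case True
    have "p ^ n < p ^ b" using True p by simp
    hence "p ^ n - 1 < p ^ b - 1" using p by (simp add: diff_less_mono)
    hence "p ^ n - 1 = 0" using less.prems by (meson dvd_imp_le not_gr0 not_le)
    hence "p ^ n = 1" using p by (metis One_nat_def diff_is_0_eq le_antisym one_le_power order.trans one_le_numeral)
    hence "n = 0" using p by simp
    thus ?thesis by simp
  next
    case False
    define A where "A = p ^ (n - b)"
    define B where "B = p ^ b"
    have A1: "A \<ge> 1" and B1: "B \<ge> 1" using p by (auto simp: A_def B_def)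
    have pn: "p ^ n = A * B" using False by (simp add: A_def B_def power_add[symmetric])
    have eq: "A * B - 1 = A * (B - 1) + (A - 1)"
    proof -
      obtain A' where "A = Suc A'" using A1 by (cases A) auto
      moreover obtain B' where "B = Suc B'" using B1 by (cases B) auto
      ultimately show ?thesis by simp
    qed
    have "(B - 1) dvd (A * (B - 1) + (A - 1))" using less.prems pn eq by (simp add: B_def)
    hence "(B - 1) dvd (A - 1)" by (simp add: dvd_add_right_iff)
    hence "b dvd (n - b)" using less.IH[of "n - b"] False b by (simp add: A_def B_def)
    thus ?thesis using False by (metis dvd_add_right_iff dvd_refl le_add_diff_inverse not_less)
  qed
qed


lemma (in group) pow_FactGroup:
  assumes x: "x \<in> carrier G"
  shows "(center G #> x) [^]\<^bsub>G Mod center G\<^esub> (n::nat) = center G #> (x [^] n)"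
proof (induction n)
  case 0
  show ?case using subgroup.subset[OF center_subgroup] by simp
next
  case (Suc n)
  have "(center G #> x) [^]\<^bsub>G Mod center G\<^esub> Suc n
        = (center G #> x [^] n) <#> (center G #> x)"
    using Suc by simp
  also have "\<dots> = center G #> (x [^] n \<otimes> x)"
    using normal.rcos_sum[OF center_normal] x by simp
  finally show ?case by simp
qed

theorem proposition3p6:
  fixes G :: "('a, 'b) monoid_scheme" and p q :: nat
  assumes "group G" and "finite (carrier G)"
    and "induced_regular G"
    and "Factorial_Ring.prime p" and "Factorial_Ring.prime q"
    and "card (rcosets\<^bsub>G\<^esub> (center G)) = p ^ q"
  shows "elementary_p_group (G Mod (center G)) p \<and>
         (\<forall>x \<in> carrier G - center G. card (beta G x) = (p - 1) * card (center G))"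
proof -
  interpret group G by fact
  note fin = assms(2)
  define Z where "Z = center G"
  have Zsg: "subgroup Z G" unfolding Z_def by (rule center_subgroup)
  have Zsub: "Z \<subseteq> carrier G" using subgroup.subset[OF Zsg] .
  have finZ: "finite Z" using Zsub fin finite_subset by blast
  have Zpos: "card Z > 0" using finZ subgroup.one_closed[OF Zsg] card_gt_0_iff by blast
  have p2: "p \<ge> 2" using assms(4) prime_ge_2_nat by blast
  have q2: "q \<ge> 2" using assms(5) prime_ge_2_nat by blast
  have ordG: "card (carrier G) = p ^ q * card Z"
    using lagrange[OF Zsg] assms(6) by (simp add: Z_def order_def)
  have pq1: "p ^ q > 1" using p2 q2 by (intro one_less_power) auto
  have bsub: "beta G x \<subseteq> carrier G - Z" if "x \<in> carrier G - Z" for x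
    using beta_sub that unfolding Z_def by blast
  have finb: "finite (beta G x)" for x
    using fin finite_subset[of "beta G x" "carrier G"] by (auto simp: beta_def)
  have deg: "induced_nc_degree G x = card (carrier G - Z) - card (beta G x)"
    if x: "x \<in> carrier G - Z" for x
  proof -
    have "{y \<in> carrier G - center G. nc_adj G x y} = (carrier G - Z) - beta G x"
      by (auto simp: Z_def nc_adj_def beta_def)
    thus ?thesis unfolding induced_nc_degree_def
      using card_Diff_subset[OF finb bsub[OF x]] by simp
  qed
  have ble: "card (beta G x) \<le> card (carrier G - Z)" if "x \<in> carrier G - Z" for x
    using card_mono[OF _ bsub[OF that]] fin by blast
  have const: "card (beta G x) = card (beta G y)"
    if "x \<in> carrier G - Z" "y \<in> carrier G - Z" for x y
  proof -
    have "induced_nc_degree G x = induced_nc_degree G y"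
      using assms(3) that unfolding induced_regular_def Z_def by blast
    thus ?thesis using deg[OF that(1)] deg[OF that(2)] ble[OF that(1)] ble[OF that(2)] by linarith
  qed
  have xinb: "x \<in> beta G x" if "x \<in> carrier G" for x using that by (auto simp: beta_def)
  have ne: "carrier G - Z \<noteq> {}"
  proof
    assume "carrier G - Z = {}"
    hence "carrier G = Z" using Zsub by blast
    hence "card Z = p ^ q * card Z" using ordG by simp
    thus False using Zpos pq1 by simp
  qed
  define f where "f y = card (centralizer G y)" for y
  define M where "M = Max (f ` (carrier G - Z))"
  have finS: "finite (carrier G - Z)" using fin by simp
  have "M \<in> f ` (carrier G - Z)" unfolding M_def using finS ne by simp
  then obtain x0 where x0: "x0 \<in> carrier G - Z" and fx0: "f x0 = M" by blast
  have maxc: "card (centralizer G y) \<le> card (centralizer G x0)" if "y \<in> carrier G - Z" for y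
    using that finS fx0 unfolding M_def f_def by simp
  define H where "H = {y \<in> carrier G. \<forall>s\<in>centralizer G x0. y \<otimes>\<^bsub>G\<^esub> s = s \<otimes>\<^bsub>G\<^esub> y}"
  have Hsg: "subgroup H G" unfolding H_def by (rule comm_set_subgroup[OF centralizer_sub])
  have ZH: "Z \<subseteq> H" using centralizer_sub by (auto simp: H_def Z_def center_def)
  have finC: "finite (centralizer G y)" for y using fin centralizer_sub finite_subset by metis
  have betaH: "beta G x0 = H - Z"
  proof
    show "beta G x0 \<subseteq> H - Z"
    proof
      fix y assume y: "y \<in> beta G x0"
      hence "y \<notin> Z" using bsub[OF x0] by blast
      moreover have "y \<in> H" using y by (auto simp: beta_def H_def centralizer_def)
      ultimately show "y \<in> H - Z" by blast
    qed
  next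
    show "H - Z \<subseteq> beta G x0"
    proof
      fix y assume y: "y \<in> H - Z"
      hence yc: "y \<in> carrier G" by (simp add: H_def)
      have sub: "centralizer G x0 \<subseteq> centralizer G y"
        using y by (auto simp: H_def centralizer_def)
      have "card (centralizer G y) \<le> card (centralizer G x0)" using maxc y yc by blast
      hence "centralizer G x0 = centralizer G y" using card_seteq[OF finC sub] by blast
      thus "y \<in> beta G x0" using yc by (simp add: beta_def)
    qed
  qed
  have finH: "finite H" using fin subgroup.subset[OF Hsg] finite_subset by blast
  have cardH: "card H = card (beta G x0) + card Z"
    using betaH card_Diff_subset[OF finZ ZH] card_mono[OF finH ZH] by simp
  have HC: "H \<subseteq> centralizer G x0"
    using x0 by (auto simp: H_def centralizer_def)
  have Cne: "centralizer G x0 \<noteq> carrier G" using x0 center_iff unfolding Z_def by blast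
  have HltG: "card H < card (carrier G)"
  proof -
    have "H \<subset> carrier G" using HC Cne centralizer_sub by blast
    thus ?thesis using psubset_card_mono fin by blast
  qed
  have Hdvd: "card H dvd p ^ q * card Z"
    using lagrange[OF Hsg] ordG by (metis dvd_triv_right order_def)
  define c0 where "c0 = card ((\<lambda>y. center G #>\<^bsub>G\<^esub> y) ` beta G x0)"
  have k0: "card (beta G x0) = c0 * card Z"
    using card_beta[OF fin] unfolding c0_def Z_def by simp
  have cH: "card H = (c0 + 1) * card Z" using cardH k0 by simp
  have "(c0 + 1) * card Z dvd p ^ q * card Z" using Hdvd cH by simp
  hence "(c0 + 1) dvd p ^ q" using Zpos dvd_times_right_cancel_iff[of "card Z" "c0 + 1" "p ^ q"] by simp
  then obtain b where b: "b \<le> q" "c0 + 1 = p ^ b"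
    using divides_primepow_nat[OF assms(4)] by blast
  have c0pos: "c0 > 0"
  proof -
    have "card (beta G x0) > 0" using xinb x0 finb card_gt_0_iff by blast
    thus ?thesis using k0 by simp
  qed
  have b1: "b \<ge> 1" using b c0pos by (cases b) auto
  have bq: "b < q"
  proof -
    have "(c0 + 1) * card Z < p ^ q * card Z" using HltG cH ordG by simp
    hence "(c0 + 1) < p ^ q" using mult_less_cancel2 by blast
    hence "p ^ b < p ^ q" using b by simp
    thus ?thesis using p2 by simp
  qed
  define P where "P = beta G ` (carrier G - Z)"
  have UP: "\<Union>P = carrier G - Z" using bsub xinb unfolding P_def by blast
  have "card (beta G x0) * card P = card (\<Union>P)"
  proof (rule card_partition)
    show "finite P" unfolding P_def using finS by simp
    show "finite (\<Union>P)" using UP finS by simp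
    show "card c = card (beta G x0)" if "c \<in> P" for c
      using that const x0 unfolding P_def by blast
    show "c1 \<inter> c2 = {}" if "c1 \<in> P" "c2 \<in> P" "c1 \<noteq> c2" for c1 c2
      using that unfolding P_def by (auto simp: beta_def)
  qed
  hence "c0 * card Z * card P = (p ^ q - 1) * card Z"
    using UP k0 ordG card_Diff_subset[OF finZ Zsub] by (simp add: diff_mult_distrib)
  hence "c0 * card P = p ^ q - 1" using Zpos by simp
  hence "(p ^ b - 1) dvd (p ^ q - 1)" using b by (metis add_diff_cancel_right' dvd_triv_left)
  hence "b dvd q" using pow_sub1_dvd[OF p2 b1] by blast
  moreover have "\<forall>m. m dvd q \<longrightarrow> m = 1 \<or> m = q" using assms(5) by (simp add: prime_nat_iff)
  ultimately have "b = 1" using bq by blast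
  hence c0p: "c0 = p - 1" using b by simp
  have kall: "card (beta G x) = (p - 1) * card Z" if "x \<in> carrier G - Z" for x
    using const[OF that x0] k0 c0p by simp
  have cosall: "card ((\<lambda>y. Z #>\<^bsub>G\<^esub> y) ` beta G x) = p - 1" if "x \<in> carrier G - Z" for x
    using kall[OF that] card_beta[OF fin, of x] Zpos unfolding Z_def by simp
  have elem: "elementary_p_group (G Mod Z) p"
    unfolding elementary_p_group_def
  proof (intro ballI impI)
    fix Xc
    assume Xc: "Xc \<in> carrier (FactGroup G Z)"
    assume X1: "Xc \<noteq> one (FactGroup G Z)"
    interpret Q: group "G Mod Z" unfolding Z_def by (rule normal.factorgroup_is_group[OF center_normal])
    obtain x where x: "x \<in> carrier G" and Xx: "Xc = Z #>\<^bsub>G\<^esub> x"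
      using Xc unfolding carrier_FactGroup by blast
    have xZ: "x \<notin> Z"
    proof
      assume "x \<in> Z"
      hence "Xc = Z" using Xx coset_join2[OF x Zsg] by simp
      thus False using X1 by simp
    qed
    have powX: "Xc [^]\<^bsub>G Mod Z\<^esub> (n::nat) = Z #>\<^bsub>G\<^esub> (x [^]\<^bsub>G\<^esub> n)" for n
      using pow_FactGroup[OF x] Xx unfolding Z_def by simp
    have oQ: "order (G Mod Z) = p ^ q"
      using assms(6) by (simp add: order_def FactGroup_def Z_def)
    obtain a where a: "a \<le> q" "Q.ord Xc = p ^ a"
      using Q.ord_dvd_group_order[OF Xc] oQ divides_primepow_nat[OF assms(4)] by auto
    have a0: "a \<noteq> 0" using a Q.ord_eq_1[OF Xc] X1 by auto
    show "Q.ord Xc = p"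
    proof (rule ccontr)
      assume "Q.ord Xc \<noteq> p"
      hence a2: "a \<ge> 2" using a a0 by (cases a) auto
      have pa: "p ^ 2 \<le> p ^ a" using a2 p2 by (simp add: power_increasing)
      have h2: "2 * p \<le> p * p" using mult_le_mono1[OF p2] by simp
      have h1: "p * p \<le> Q.ord Xc" using pa a by (simp add: power2_eq_square)
      have ordbig: "Q.ord Xc \<ge> p + 2" using h1 h2 p2 by linarith
      define T where "T = {1..p+1} - {p}"
      have cardT: "card T = p" unfolding T_def using p2 by (subst card_Diff_singleton) auto
      have XN: "Xc [^]\<^bsub>G Mod Z\<^esub> (p ^ q) = Z" using Q.pow_order_eq_1[OF Xc] oQ by simp
      have inb: "x [^]\<^bsub>G\<^esub> i \<in> beta G x" if i: "i \<in> T" for i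
      proof -
        have "coprime i p"
        proof (cases "i = p + 1")
          case True thus ?thesis by simp
        next
          case False
          hence "0 < i" "i < p" using i unfolding T_def by auto
          hence "\<not> p dvd i" by (auto dest: dvd_imp_le)
          hence "coprime p i" by (rule prime_imp_coprime[OF assms(4)])
          thus ?thesis by (simp add: coprime_commute)
        qed
        hence cop: "coprime i (p ^ q)" by simp
        have i0: "i \<noteq> 0" using i unfolding T_def by auto
        obtain j y where jy: "i * j = p ^ q * y + 1"
          using bezout_nat[OF i0, of "p ^ q"] cop by auto
        have "Xc [^]\<^bsub>G Mod Z\<^esub> (i * j) = Xc"
        proof -
          have y1: "Xc [^]\<^bsub>G Mod Z\<^esub> (p ^ q * y) = \<one>\<^bsub>G Mod Z\<^esub>"
            using Q.nat_pow_pow[OF Xc, of "p ^ q" y] XN Q.nat_pow_one[of y] by simp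
          have "Xc [^]\<^bsub>G Mod Z\<^esub> (i * j) = Xc [^]\<^bsub>G Mod Z\<^esub> (p ^ q * y + 1)"
            using jy by simp
          also have "\<dots> = Xc [^]\<^bsub>G Mod Z\<^esub> (p ^ q * y) \<otimes>\<^bsub>G Mod Z\<^esub> Xc [^]\<^bsub>G Mod Z\<^esub> (1::nat)"
            by (rule Q.nat_pow_mult[OF Xc, symmetric])
          also have "\<dots> = \<one>\<^bsub>G Mod Z\<^esub> \<otimes>\<^bsub>G Mod Z\<^esub> Xc"
            by (simp only: y1 Q.nat_pow_eone[OF Xc])
          also have "\<dots> = Xc" by (rule Q.l_one[OF Xc])
          finally show ?thesis .
        qed
        hence "Z #>\<^bsub>G\<^esub> (x [^]\<^bsub>G\<^esub> (i * j)) = Z #>\<^bsub>G\<^esub> x" using powX Xx by metis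
        hence "x [^]\<^bsub>G\<^esub> (i * j) \<in> Z #>\<^bsub>G\<^esub> x" using rcos_self[OF _ Zsg, of "x [^]\<^bsub>G\<^esub> (i * j)"] x by simp
        then obtain z where z: "z \<in> Z" "x [^]\<^bsub>G\<^esub> (i * j) = z \<otimes>\<^bsub>G\<^esub> x" by (auto simp: r_coset_def)
        have Cij: "centralizer G (x [^]\<^bsub>G\<^esub> (i * j)) = centralizer G x"
          using z centralizer_center_mult[OF x] unfolding Z_def by simp
        have "centralizer G x \<subseteq> centralizer G (x [^]\<^bsub>G\<^esub> i)" using centralizer_pow[OF x] .
        moreover have "centralizer G (x [^]\<^bsub>G\<^esub> i) \<subseteq> centralizer G ((x [^]\<^bsub>G\<^esub> i) [^]\<^bsub>G\<^esub> j)"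
          using centralizer_pow x by simp
        ultimately have "centralizer G (x [^]\<^bsub>G\<^esub> i) = centralizer G x"
          using Cij x by (simp add: nat_pow_pow)
        thus ?thesis using x by (simp add: beta_def)
      qed
      have sub: "(\<lambda>i. Xc [^]\<^bsub>G Mod Z\<^esub> i) ` T \<subseteq> (\<lambda>y. Z #>\<^bsub>G\<^esub> y) ` beta G x"
        using inb powX by blast
      have "inj_on (\<lambda>i. Xc [^]\<^bsub>G Mod Z\<^esub> i) T"
      proof (rule inj_on_subset[OF Q.ord_inj[OF Xc]])
        show "T \<subseteq> {0 .. Q.ord Xc - 1}" using ordbig unfolding T_def by auto
      qed
      hence "card ((\<lambda>i. Xc [^]\<^bsub>G Mod Z\<^esub> i) ` T) = p" using cardT card_image by metis
      moreover have "card ((\<lambda>y. Z #>\<^bsub>G\<^esub> y) ` beta G x) = p - 1" using cosall x xZ by blast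
      moreover have "finite ((\<lambda>y. Z #>\<^bsub>G\<^esub> y) ` beta G x)" using finb by simp
      ultimately have "p \<le> p - 1" using card_mono[OF _ sub] by metis
      thus False using p2 by simp
    qed
  qed
  show ?thesis using elem kall unfolding Z_def by blast
qed

end
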